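(* Let $w$ be a weight and let $p(\cdot)$ be a measurable exponent on $\mathbb B$ with $p_->1$. Suppose that $P_\alpha$ is well defined on $L^{p(\cdot)}(w)$, in the sense that $P^+_\alpha|f|(z)<\infty$ for every $f\in L^{p(\cdot)}(w)$ and every $z\in\mathbb B$. Then $w^{-1/p(\cdot)}\in L^{p'(\cdot)}(d\mu_\alpha)$, i.e. $\|w^{-1/p(\cdot)}\|_{p'(\cdot)}<\infty$.
   Context: $\mathbb B$ is the unit ball of $\mathbb C^n$, $\langle z,\zeta\rangle=\sum_j z_j\overline{\zeta_j}$, $\alpha>0$, $d\mu_\alpha(z)=(1-|z|^2)^{\alpha-1}d\mu(z)$ with $\mu$ Lebesgue measure. A weight is a non-negative locally integrable function on $\mathbb B$. For a measurable exponent $q:\mathbb B\to[1,\infty)$ (possibly unbounded) and a weight $w$: $\rho_{q(\cdot),w}(f)=\int_{\mathbb B}|f|^{q(z)}w\,d\mu_\alpha$, $L^{q(\cdot)}(w)$ is the set of measurable $f$ with $\rho_{q(\cdot),w}(f/\lambda)<\infty$ for some $\lambda>0$, normed by $\|f\|_{q(\cdot),w}=\inf\{\lambda>0:\rho_{q(\cdot),w}(f/\lambda)\le1\}$; $L^{q(\cdot)}(d\mu_\alpha)$ and $\|\cdot\|_{q(\cdot)}$ are the case $w\equiv1$. $p_-=\operatorname{ess\,inf}_{\mathbb B}p$, and $p'$ is given by $1/p+1/p'=1$. $P^+_\alpha f(z)=\int_{\mathbb B}\frac{f(\zeta)}{|1-\langle z,\zeta\rangle|^{n+\alpha}}d\mu_\alpha(\zeta)$.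 *)

theory Defs
  imports "HOL-Analysis.Analysis"
begin

definition unit_ball :: "(complex ^ 'n) set" where
  "unit_ball = ball 0 1"

definition cinner :: "complex ^ 'n \<Rightarrow> complex ^ 'n \<Rightarrow> complex" where
  "cinner z \<zeta> = (\<Sum>j\<in>UNIV. z $ j * cnj (\<zeta> $ j))"

definition mu_alpha :: "real \<Rightarrow> (complex ^ 'n) measure" where
  "mu_alpha \<alpha> = density lebesgue
     (\<lambda>z. ennreal (indicator unit_ball z * (1 - (norm z)\<^sup>2) powr (\<alpha> - 1)))"

definition is_weight :: "(complex ^ 'n \<Rightarrow> real) \<Rightarrow> bool" where
  "is_weight w \<longleftrightarrow> w \<in> borel_measurable lebesgue \<and> (\<forall>z\<in>unit_ball. 0 \<le> w z) \<and>
     (\<forall>K. compact K \<and> K \<subseteq> unit_ball \<longrightarrow> (\<integral>\<^sup>+ z. ennreal (indicator K z * w z) \<partial>lebesgue) < \<infinity>)"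

definition is_exponent :: "(complex ^ 'n \<Rightarrow> real) \<Rightarrow> bool" where
  "is_exponent q \<longleftrightarrow> q \<in> borel_measurable lebesgue \<and> (\<forall>z\<in>unit_ball. 1 \<le> q z)"

definition ess_inf_ball :: "(complex ^ 'n \<Rightarrow> real) \<Rightarrow> ereal" where
  "ess_inf_ball p = (SUP c\<in>{c::real. AE z in lebesgue. z \<in> unit_ball \<longrightarrow> c \<le> p z}. ereal c)"

definition conj_exp :: "(complex ^ 'n \<Rightarrow> real) \<Rightarrow> complex ^ 'n \<Rightarrow> real" where
  "conj_exp p z = p z / (p z - 1)"

definition modular :: "real \<Rightarrow> (complex ^ 'n \<Rightarrow> real) \<Rightarrow> (complex ^ 'n \<Rightarrow> real)
     \<Rightarrow> (complex ^ 'n \<Rightarrow> complex) \<Rightarrow> ennreal" where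
  "modular \<alpha> q w f = (\<integral>\<^sup>+ z. ennreal ((cmod (f z)) powr (q z) * w z) \<partial>mu_alpha \<alpha>)"

definition in_Lvar :: "real \<Rightarrow> (complex ^ 'n \<Rightarrow> real) \<Rightarrow> (complex ^ 'n \<Rightarrow> real)
     \<Rightarrow> (complex ^ 'n \<Rightarrow> complex) \<Rightarrow> bool" where
  "in_Lvar \<alpha> q w f \<longleftrightarrow> f \<in> borel_measurable lebesgue \<and>
     (\<exists>c>0. modular \<alpha> q w (\<lambda>z. f z / complex_of_real c) < \<infinity>)"

definition P_plus :: "real \<Rightarrow> (complex ^ 'n \<Rightarrow> real) \<Rightarrow> complex ^ 'n \<Rightarrow> ennreal" where
  "P_plus \<alpha> f z = (\<integral>\<^sup>+ \<zeta>. ennreal (f \<zeta> / (cmod (1 - cinner z \<zeta>)) powr (real CARD('n) + \<alpha>))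
      \<partial>mu_alpha \<alpha>)"

end

theory Submission
  imports Defs
begin
lemma idleb[measurable]: "(\<lambda>x. x) \<in> borel_measurable lebesgue"
  using id_borel_measurable_lebesgue by (simp add: id_def)

lemma basics:
  fixes \<alpha> :: real
  defines "D \<equiv> \<lambda>z::complex^'n. indicator unit_ball z * (1 - (norm z)\<^sup>2) powr (\<alpha> - 1)"
  shows B_meas: "unit_ball \<in> sets (lebesgue :: (complex^'n) measure)"
    and D_meas: "D \<in> borel_measurable lebesgue"
    and D_nonneg: "\<And>z. 0 \<le> D z"
    and D_pos: "\<And>z. z \<in> unit_ball \<Longrightarrow> 0 < D z"
    and D_out: "\<And>z. z \<notin> unit_ball \<Longrightarrow> D z = 0"
    and M_eq: "mu_alpha \<alpha> = density lebesgue (\<lambda>z. ennreal (D z))"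
    and M_int: "\<And>f. f \<in> borel_measurable lebesgue \<Longrightarrow> (\<integral>\<^sup>+z. f z \<partial>mu_alpha \<alpha>) = (\<integral>\<^sup>+z. ennreal (D z) * f z \<partial>lebesgue)"
    and M_space: "space (mu_alpha \<alpha> :: (complex^'n) measure) = UNIV"
    and M_sets: "sets (mu_alpha \<alpha> :: (complex^'n) measure) = sets lebesgue"
    and M_AE: "AE z in (mu_alpha \<alpha> :: (complex^'n) measure). z \<in> unit_ball"
proof -
  show B: "unit_ball \<in> sets (lebesgue :: (complex^'n) measure)" unfolding unit_ball_def by simp
  show Dm: "D \<in> borel_measurable lebesgue" unfolding D_def using B by measurable
  show "0 \<le> D z" for z unfolding D_def by simp
  show "z \<in> unit_ball \<Longrightarrow> 0 < D z" for z
  proof -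
    assume "z \<in> unit_ball"
    hence "norm z < 1" by (simp add: unit_ball_def)
    hence "(norm z)\<^sup>2 < 1" by (simp add: abs_square_less_1)
    thus ?thesis using \<open>z \<in> unit_ball\<close> unfolding D_def by simp
  qed
  show "z \<notin> unit_ball \<Longrightarrow> D z = 0" for z unfolding D_def by simp
  show Me: "mu_alpha \<alpha> = density lebesgue (\<lambda>z. ennreal (D z))" unfolding mu_alpha_def D_def by simp
  show "f \<in> borel_measurable lebesgue \<Longrightarrow> (\<integral>\<^sup>+z. f z \<partial>mu_alpha \<alpha>) = (\<integral>\<^sup>+z. ennreal (D z) * f z \<partial>lebesgue)" for f
    unfolding Me using Dm by (subst nn_integral_density) auto
  show "space (mu_alpha \<alpha> :: (complex^'n) measure) = UNIV" unfolding Me by simp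
  show "sets (mu_alpha \<alpha> :: (complex^'n) measure) = sets lebesgue" unfolding Me by simp
  show "AE z in (mu_alpha \<alpha> :: (complex^'n) measure). z \<in> unit_ball" unfolding Me using Dm
    by (subst AE_density) (auto intro!: AE_I2 simp: D_def split: split_indicator)
qed

lemma P_plus_0:
  "P_plus \<alpha> f (0::complex^'n) = (\<integral>\<^sup>+\<zeta>. ennreal (f \<zeta>) \<partial>mu_alpha \<alpha>)"
  unfolding P_plus_def cinner_def by simp


lemma half_le_False: "0 < (x::real) \<Longrightarrow> x \<le> x/2 \<Longrightarrow> False" by linarith

lemma step2:
  fixes w p :: "complex^'n \<Rightarrow> real" and \<alpha> :: real
  assumes wm[measurable]: "w \<in> borel_measurable lebesgue" and w0: "\<forall>z\<in>unit_ball. 0 \<le> w z"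
    and hyp: "\<forall>f. in_Lvar \<alpha> p w f \<longrightarrow> (\<forall>z\<in>unit_ball. P_plus \<alpha> (\<lambda>\<zeta>. cmod (f \<zeta>)) z < \<infinity>)"
  shows "AE z in lebesgue. z \<in> unit_ball \<longrightarrow> 0 < w z"
proof (rule ccontr)
  define D where "D \<equiv> \<lambda>z::complex^'n. indicator unit_ball z * (1 - (norm z)\<^sup>2) powr (\<alpha> - 1)"
  have b2: "D \<in> borel_measurable lebesgue" unfolding D_def by (rule D_meas)
  have b3: "\<And>z. 0 \<le> D z" unfolding D_def by (rule D_nonneg)
  have b4: "\<And>z. z \<in> unit_ball \<Longrightarrow> 0 < D z" unfolding D_def by (rule D_pos)
  have b7: "\<And>f. f \<in> borel_measurable lebesgue \<Longrightarrow> (\<integral>\<^sup>+z. f z \<partial>mu_alpha \<alpha>) = (\<integral>\<^sup>+z. ennreal (D z) * f z \<partial>lebesgue)"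
    unfolding D_def by (rule M_int)
  have Bm[measurable]: "(unit_ball :: (complex^'n) set) \<in> sets lebesgue" by (rule B_meas)
  have Dm[measurable]: "D \<in> borel_measurable lebesgue" by (rule b2)
  define Z where "Z = {z \<in> (unit_ball :: (complex^'n) set). \<not> 0 < w z}"
  have Zm[measurable]: "Z \<in> sets lebesgue" unfolding Z_def by measurable
  assume "\<not> (AE z in lebesgue. z \<in> unit_ball \<longrightarrow> 0 < w z)"
  hence Zne: "emeasure lebesgue Z \<noteq> 0"
    using AE_iff_measurable[OF Zm, of "\<lambda>z. z \<in> unit_ball \<longrightarrow> 0 < w z"] by (auto simp: Z_def)
  have ZB: "Z \<subseteq> ball 0 1" unfolding Z_def unit_ball_def by auto
  have bZ: "bounded Z" using ZB bounded_ball bounded_subset by blast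
  have Zl: "Z \<in> lmeasurable" by (rule bounded_set_imp_lmeasurable[OF bZ Zm])
  define m where "m = measure lebesgue Z"
  have m0: "0 < m"
  proof -
    have "ennreal m \<noteq> 0" using Zne emeasure_eq_measure2[OF Zl] by (simp add: m_def)
    thus ?thesis by (metis ennreal_0 measure_nonneg order_le_less m_def)
  qed
  define F where "F t = measure lebesgue (Z \<inter> cball 0 t)" for t
  have ZCl: "Z \<inter> cball 0 t \<in> lmeasurable" for t
    by (rule bounded_set_imp_lmeasurable) (auto intro: bounded_Int bZ)
  have cbm[measurable]: "cball (0::complex^'n) r \<in> sets lebesgue" for r by simp
  have Fmono: "F s \<le> F t" if "s \<le> t" for s t
    unfolding F_def using that ZCl by (intro measure_mono_fmeasurable) auto
  have monoF: "mono F" by (auto intro: monoI Fmono)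
  define V where "V = unit_ball_vol (real DIM(complex^'n))"
  define d where "d = DIM(complex^'n)"
  have V0: "0 \<le> V" unfolding V_def by simp
  have mc0: "measure lborel (cball (0::complex^'n) t) = V * t ^ d" if "0 \<le> t" for t
    using content_cball[OF that, of "0::complex^'n"] by (simp add: V_def d_def)
  have mc: "measure lebesgue (cball (0::complex^'n) t) = V * t ^ d" if "0 \<le> t" for t
    using mc0[OF that] by simp
  have cfin: "emeasure lebesgue (cball (0::complex^'n) t) \<noteq> \<infinity>" for t
    using lmeasurable_cball[of "0::complex^'n" t] by (simp add: fmeasurable_def)
  have Fdiff: "F t - F s \<le> V * (t ^ d - s ^ d)" if "0 \<le> s" "s \<le> t" for s t
  proof -
    have "Z \<inter> cball 0 t \<subseteq> (Z \<inter> cball 0 s) \<union> (cball 0 t - cball 0 s)" by auto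
    hence "F t \<le> measure lebesgue ((Z \<inter> cball 0 s) \<union> (cball 0 t - cball 0 s))"
      unfolding F_def by (intro measure_mono_fmeasurable bounded_set_imp_lmeasurable) (auto intro: bounded_Int bZ sets.Un sets.Diff sets.Int)
    also have "\<dots> \<le> F s + measure lebesgue (cball (0::complex^'n) t - cball 0 s)"
      unfolding F_def by (rule measure_Un_le) auto
    also have "measure lebesgue (cball (0::complex^'n) t - cball 0 s) = V * t^d - V * s^d"
      using that cfin by (subst measure_Diff) (auto simp: mc0 subset_cball)
    finally show ?thesis by (simp add: algebra_simps)
  qed
  have F1: "F 1 = m"
  proof -
    have "Z \<inter> cball 0 1 = Z" using ZB by auto
    thus ?thesis by (simp add: F_def m_def)
  qed
  have F0: "F 0 = 0"
  proof -
    have "F 0 \<le> measure lebesgue (cball (0::complex^'n) 0)"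
      unfolding F_def by (intro measure_mono_fmeasurable lmeasurable_cball) auto
    also have "\<dots> = 0" using mc[of 0] by (simp add: d_def)
    finally show ?thesis using measure_nonneg[of lebesgue] by (simp add: F_def antisym)
  qed
  have lip: "(V * d)-lipschitz_on {0..1} F"
  proof (rule lipschitz_onI)
    fix x y :: real assume xy: "x \<in> {0..1}" "y \<in> {0..1}"
    have gen: "\<bar>F b - F a\<bar> \<le> V * d * \<bar>b - a\<bar>" if "a \<in> {0..1}" "b \<in> {0..1}" "a \<le> b" for a b
    proof -
      have "F b - F a \<le> V * (b ^ d - a ^ d)" using that by (intro Fdiff) auto
      also have "b ^ d - a ^ d \<le> d * (b - a)"
        using norm_power_diff[of b a d] that by auto
      hence "V * (b ^ d - a ^ d) \<le> V * (d * (b - a))" using V0 by (intro mult_left_mono)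
      finally show ?thesis using Fmono[OF that(3)] that by (simp add: abs_if mult.assoc)
    qed
    show "dist (F x) (F y) \<le> V * d * dist x y"
      using gen[of x y] gen[of y x] xy by (cases "x \<le> y") (auto simp: dist_real_def abs_minus_commute)
  qed (use V0 in simp)
  have cont: "continuous_on {0..1} F" by (rule lipschitz_on_continuous_on[OF lip])
  have "\<forall>k. \<exists>x. 0 \<le> x \<and> x \<le> 1 \<and> F x = m / 2^k"
  proof
    fix k :: nat
    have "m / 2^k \<le> m" using m0 by (simp add: divide_le_eq one_le_power mult_le_cancel_left1)
    moreover have "0 \<le> m / 2^k" using m0 by simp
    ultimately show "\<exists>x. 0 \<le> x \<and> x \<le> 1 \<and> F x = m / 2^k"
      using IVT'[of F 0 "m / 2^k" 1] F0 F1 cont by auto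
  qed
  then obtain t where t: "\<And>k. 0 \<le> t k" "\<And>k. t k \<le> 1" "\<And>k. F (t k) = m / 2^k"
    by metis
  have tdec: "t (Suc k) \<le> t k" for k
  proof (rule ccontr)
    assume "\<not> ?thesis"
    hence "F (t k) \<le> F (t (Suc k))" by (intro Fmono) simp
    hence "m / 2^k \<le> (m / 2^k) / 2" using t(3)[of k] t(3)[of "Suc k"] by simp
    moreover have "0 < m / 2^k" using m0 by simp
    ultimately show False using half_le_False by blast
  qed
  have decseq: "decseq t" using tdec by (simp add: decseq_Suc_iff)
  define A where "A k = Z \<inter> {z. t (Suc k) < norm z \<and> norm z \<le> t k}" for k
  have Aeq: "A k = (Z \<inter> cball 0 (t k)) - (Z \<inter> cball 0 (t (Suc k)))" for k
    unfolding A_def by auto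
  have Am[measurable]: "A k \<in> sets lebesgue" for k unfolding Aeq using ZCl by auto
  have Ameas: "measure lebesgue (A k) = m / 2 ^ Suc k" for k
  proof -
    have fin: "emeasure lebesgue (Z \<inter> cball 0 (t k)) \<noteq> \<infinity>" using fmeasurableD2[OF ZCl[of "t k"]] by simp
    have sub: "Z \<inter> cball 0 (t (Suc k)) \<subseteq> Z \<inter> cball 0 (t k)" using tdec[of k] by auto
    have "measure lebesgue (A k) = F (t k) - F (t (Suc k))"
      unfolding Aeq F_def by (rule measure_Diff[OF fin _ _ sub]) (use ZCl in auto)
    thus ?thesis using t(3)[of k] t(3)[of "Suc k"] by (simp add: field_simps)
  qed
  have Aem: "emeasure lebesgue (A k) = ennreal (m / 2 ^ Suc k)" for k
  proof -
    have "A k \<in> lmeasurable" unfolding Aeq using ZCl by (intro fmeasurable_Diff) auto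
    thus ?thesis using Ameas[of k] by (simp add: emeasure_eq_measure2)
  qed
  have disj: "disjoint_family A"
  proof (auto simp: disjoint_family_on_def)
    fix j k z assume jk: "j \<noteq> k" and zj: "z \<in> A j" and zk: "z \<in> A k"
    have aux: "False" if "i < l" "z \<in> A i" "z \<in> A l" for i l
    proof -
      have "t l \<le> t (Suc i)" using decseq that(1) by (simp add: decseqD)
      thus False using that(2,3) by (auto simp: A_def)
    qed
    show False using jk zj zk aux[of j k] aux[of k j] by (cases "j < k") auto
  qed
  define h where "h z = 1 / F (norm z)" for z :: "complex^'n"
  have hm[measurable]: "h \<in> borel_measurable lebesgue"
  proof -
    have g: "(\<lambda>x. 1 / F x) \<in> borel_measurable borel"
      using borel_measurable_mono[OF monoF] by measurable
    have "(\<lambda>z::complex^'n. norm z) \<in> borel_measurable lebesgue" by measurable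
    from measurable_compose[OF this g] show ?thesis unfolding h_def[abs_def] by simp
  qed
  have pt: "(\<Sum>k. ennreal (2^k / m) * indicator (A k) z) \<le> ennreal (indicator Z z * h z)" for z
  proof (cases "\<exists>j. z \<in> A j")
    case True
    then obtain j where zj: "z \<in> A j" by auto
    have sum: "(\<Sum>k. ennreal (2^k / m) * indicator (A k) z) = ennreal (2^j / m)"
      by (rule suminf_cmult_indicator[OF disj zj])
    have zZ: "z \<in> Z" and nz: "t (Suc j) < norm z" "norm z \<le> t j" using zj by (auto simp: A_def)
    have "F (norm z) \<le> m / 2^j" using Fmono[OF nz(2)] t(3)[of j] by simp
    moreover have "m / 2 ^ Suc j \<le> F (norm z)" using Fmono[of "t (Suc j)" "norm z"] nz(1) t(3)[of "Suc j"] by simp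
    moreover have "0 < m / 2 ^ Suc j" using m0 by simp
    ultimately have y: "F (norm z) \<le> m / 2^j" "0 < F (norm z)" by linarith+
    have y2: "2^j * F (norm z) \<le> m" using y(1) by (simp add: le_divide_eq mult.commute)
    have "2^j / m \<le> h z" unfolding h_def using m0 y(2) y2 by (simp add: divide_simps)
    thus ?thesis using zZ sum by (simp add: ennreal_leI)
  next
    case False
    hence "(\<Sum>k. ennreal (2^k / m) * indicator (A k) z) = 0" by simp
    thus ?thesis by simp
  qed
  define f where "f z = complex_of_real (indicator Z z * h z / D z)" for z
  have fm[measurable]: "f \<in> borel_measurable lebesgue" unfolding f_def by measurable
  have hnn: "0 \<le> h z" for z unfolding h_def using Fmono[of 0 "norm z"] F0 by simp
  have cf: "cmod (f z) = indicator Z z * h z / D z" for z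
    unfolding f_def norm_of_real by (rule abs_of_nonneg) (simp add: hnn b3)
  have int_inf: "(\<integral>\<^sup>+z. ennreal (cmod (f z)) \<partial>mu_alpha \<alpha>) = \<infinity>"
  proof -
    have "(\<integral>\<^sup>+z. ennreal (cmod (f z)) \<partial>mu_alpha \<alpha>) = (\<integral>\<^sup>+z. ennreal (D z) * ennreal (cmod (f z)) \<partial>lebesgue)"
      by (rule b7) measurable
    also have "\<dots> = (\<integral>\<^sup>+z. ennreal (indicator Z z * h z) \<partial>lebesgue)"
    proof (rule nn_integral_cong)
      fix z
      show "ennreal (D z) * ennreal (cmod (f z)) = ennreal (indicator Z z * h z)"
      proof (cases "z \<in> Z")
        case True
        hence "0 < D z" using b4[of z] by (auto simp: Z_def)
        thus ?thesis using True hnn[of z] by (simp add: cf ennreal_mult[symmetric])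
      qed (simp add: cf)
    qed
    also have "\<dots> \<ge> (\<integral>\<^sup>+z. (\<Sum>k. ennreal (2^k / m) * indicator (A k) z) \<partial>lebesgue)"
      by (intro nn_integral_mono pt)
    moreover have "(\<integral>\<^sup>+z. (\<Sum>k. ennreal (2^k / m) * indicator (A k) z) \<partial>lebesgue) = (\<Sum>k. ennreal (1/2))"
    proof -
      have "(\<integral>\<^sup>+z. (\<Sum>k. ennreal (2^k / m) * indicator (A k) z) \<partial>lebesgue)
          = (\<Sum>k. \<integral>\<^sup>+z. ennreal (2^k / m) * indicator (A k) z \<partial>lebesgue)"
        by (rule nn_integral_suminf) measurable
      also have "\<dots> = (\<Sum>k. ennreal (2^k / m) * ennreal (m / 2 ^ Suc k))"
        by (simp add: nn_integral_cmult_indicator Aem)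
      also have "\<dots> = (\<Sum>k. ennreal (1/2))"
        using m0 by (simp add: ennreal_mult[symmetric])
      finally show ?thesis .
    qed
    moreover have "(\<Sum>k. ennreal (1/2)) = \<infinity>"
    proof (rule ccontr)
      assume "(\<Sum>k. ennreal (1/2)) \<noteq> \<infinity>"
      hence "summable (\<lambda>k::nat. (1/2::real))" by (intro summable_suminf_not_top) auto
      thus False by (subst (asm) summable_const_iff) simp
    qed
    ultimately show ?thesis by (simp add: top_unique)
  qed
  have "in_Lvar \<alpha> p w f"
    unfolding in_Lvar_def
  proof (intro conjI exI[of _ 1])
    show "f \<in> borel_measurable lebesgue" by (rule fm)
    have "modular \<alpha> p w (\<lambda>z. f z / complex_of_real 1) = (\<integral>\<^sup>+z. 0 \<partial>(mu_alpha \<alpha> :: (complex^'n) measure))"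
      unfolding modular_def
    proof (rule nn_integral_cong)
      fix z
      show "ennreal (cmod (f z / complex_of_real 1) powr p z * w z) = 0"
      proof (cases "z \<in> Z")
        case True
        hence "w z = 0" using w0 by (auto simp: Z_def)
        thus ?thesis by simp
      next
        case False
        thus ?thesis by (simp add: cf)
      qed
    qed
    thus "modular \<alpha> p w (\<lambda>z. f z / complex_of_real 1) < \<infinity>" by simp
  qed simp
  hence "P_plus \<alpha> (\<lambda>\<zeta>. cmod (f \<zeta>)) 0 < \<infinity>" using hyp by (auto simp: unit_ball_def)
  thus False using int_inf by (simp add: P_plus_0)
qed


lemma key_ineq:
  fixes x y s :: real
  assumes "0 < x" "x \<le> y" "0 < s"
  shows "(y - x) * y powr (-(s+1)) \<le> (x powr (-s) - y powr (-s)) / s"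
proof -
  define u where "u = x / y"
  have y0: "0 < y" using assms by linarith
  have u0: "0 < u" and u1: "u \<le> 1" using assms y0 by (auto simp: u_def divide_le_eq_1)
  have "u powr (-s) = exp (- s * ln u)" using u0 by (simp add: powr_def)
  also have "\<dots> \<ge> 1 + (- s * ln u)" by (rule exp_ge_add_one_self)
  finally have e1: "u powr (-s) \<ge> 1 - s * ln u" by simp
  have "ln u \<le> u - 1" using u0 by (rule ln_le_minus_one)
  hence "s * ln u \<le> s * (u - 1)" using assms(3) by (simp add: mult_left_mono)
  with e1 have e2: "s * (1 - u) \<le> u powr (-s) - 1" by (simp add: algebra_simps)
  have xp: "x powr (-s) = y powr (-s) * u powr (-s)"
    using y0 u0 by (simp add: u_def powr_divide powr_minus divide_simps)
  have "y powr (-(s+1)) = y powr (-s + -1)" by simp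
  also have "\<dots> = y powr (-s) * y powr (-1)" by (rule powr_add)
  also have "y powr (-1) = 1 / y" using y0 by (simp add: powr_minus_divide)
  finally have yp: "y powr (-(s+1)) = y powr (-s) / y" by simp
  have "(y - x) * y powr (-(s+1)) = y powr (-s) * (1 - u)"
    using y0 by (subst yp) (simp add: u_def field_simps)
  also have "\<dots> \<le> y powr (-s) * ((u powr (-s) - 1) / s)"
    using e2 assms(3) by (intro mult_left_mono) (auto simp: field_simps)
  also have "\<dots> = (x powr (-s) - y powr (-s)) / s" by (simp add: xp field_simps)
  finally show ?thesis .
qed

lemma abel_dini:
  fixes m :: "nat \<Rightarrow> real" and r :: real
  assumes m0: "\<And>k. 0 \<le> m k" and div: "\<not> summable m" and r: "1 < r"
  defines "T \<equiv> \<lambda>k. 1 + (\<Sum>i<k. m i)"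
  shows "\<not> summable (\<lambda>k. (1 / T (Suc k)) * m k)"
    and "summable (\<lambda>k. (1 / T (Suc k)) powr r * m k)"
proof -
  have T1: "T k \<ge> 1" for k unfolding T_def using m0 by (simp add: sum_nonneg)
  have Tmono: "T j \<le> T k" if "j \<le> k" for j k
    unfolding T_def using m0 that by (intro add_left_mono sum_mono2) auto
  have TS: "T (Suc k) = T k + m k" for k unfolding T_def by simp
  show "summable (\<lambda>k. (1 / T (Suc k)) powr r * m k)"
  proof (rule summableI_nonneg_bounded)
    define s where "s = r - 1"
    have s0: "0 < s" using r by (simp add: s_def)
    have b: "(1 / T (Suc k)) powr r * m k \<le> (T k powr (-s) - T (Suc k) powr (-s)) / s" for k
    proof -
      have "(1 / T (Suc k)) powr r = 1 / T (Suc k) powr r"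
        using T1[of "Suc k"] by (simp add: powr_divide)
      also have "\<dots> = T (Suc k) powr (-r)" by (simp add: powr_minus_divide)
      finally have "(1 / T (Suc k)) powr r = T (Suc k) powr (-(s+1))" by (simp add: s_def)
      moreover have "m k = T (Suc k) - T k" by (simp add: TS)
      moreover have "(T (Suc k) - T k) * T (Suc k) powr (-(s+1)) \<le> (T k powr (-s) - T (Suc k) powr (-s)) / s"
        using T1[of k] s0 m0[of k] by (intro key_ineq) (auto simp: TS)
      ultimately show ?thesis by (simp only: mult.commute)
    qed
    fix n
    have "(\<Sum>k<n. (1 / T (Suc k)) powr r * m k) \<le> (\<Sum>k<n. (T k powr (-s) - T (Suc k) powr (-s)) / s)"
      by (intro sum_mono b)
    also have "\<dots> = (T 0 powr (-s) - T n powr (-s)) / s"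
      using sum_lessThan_telescope'[of "\<lambda>k. T k powr (-s)" n] by (simp add: sum_divide_distrib[symmetric])
    also have "\<dots> \<le> T 0 powr (-s) / s" using s0 by (simp add: divide_right_mono)
    finally show "(\<Sum>k<n. (1 / T (Suc k)) powr r * m k) \<le> T 0 powr (-s) / s" .
  qed (use m0 in auto)
  show "\<not> summable (\<lambda>k. (1 / T (Suc k)) * m k)"
  proof
    assume "summable (\<lambda>k. (1 / T (Suc k)) * m k)"
    then obtain N where N: "\<And>a b. a \<ge> N \<Longrightarrow> norm (sum (\<lambda>k. (1 / T (Suc k)) * m k) {a..<b}) < 1/2"
      unfolding summable_Cauchy by (metis half_gt_zero_iff zero_less_one)
    have "\<exists>M. T M > 2 * T N"
    proof (rule ccontr)
      assume "\<not> ?thesis"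
      hence "\<forall>M. T M \<le> 2 * T N" by (auto simp: not_less)
      hence "\<forall>M. sum m {..<M} \<le> 2 * T N" unfolding T_def by (smt (verit))
      hence "summable m" using m0 by (intro summableI_nonneg_bounded[where x="2 * T N"]) auto
      with div show False by simp
    qed
    then obtain M where M: "T M > 2 * T N" by auto
    have NM: "N \<le> M" using Tmono[of M N] M T1[of N] by (cases "N \<le> M") auto
    have TMpos: "T M > 0" using T1[of M] by simp
    have "(\<Sum>k\<in>{N..<M}. m k / T M) \<le> (\<Sum>k\<in>{N..<M}. (1 / T (Suc k)) * m k)"
    proof (intro sum_mono)
      fix k assume "k \<in> {N..<M}"
      hence "T (Suc k) \<le> T M" by (intro Tmono) auto
      thus "m k / T M \<le> 1 / T (Suc k) * m k"
        using m0[of k] T1[of "Suc k"] by (simp add: divide_simps mult_left_mono)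
    qed
    also have "\<dots> < 1/2" using N[of N M] by (simp add: sum_nonneg m0 T1)
    finally have "(\<Sum>k\<in>{N..<M}. m k) / T M < 1/2" by (simp add: sum_divide_distrib)
    moreover have "(\<Sum>k\<in>{N..<M}. m k) = T M - T N"
    proof -
      have "sum m {..<M} = sum m {..<N} + sum m {N..<M}"
        using NM by (simp add: lessThan_atLeast0 sum.atLeastLessThan_concat)
      thus ?thesis unfolding T_def by simp
    qed
    ultimately have "(T M - T N) / T M < 1/2" by simp
    hence "T M - T N < T M / 2" using TMpos by (simp add: divide_less_eq)
    thus False using M by linarith
  qed
qed

lemma decomp:
  fixes M :: "'a measure" and \<sigma> :: "'a \<Rightarrow> real" and J :: "'a \<Rightarrow> nat" and g :: "nat \<Rightarrow> real"
  assumes sp: "space M = UNIV" and [measurable]: "\<sigma> \<in> borel_measurable M" "J \<in> measurable M (count_space UNIV)"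
    and s0: "\<And>z. 0 \<le> \<sigma> z" and g0: "\<And>k. 0 \<le> g k"
  shows "(\<integral>\<^sup>+z. ennreal (\<sigma> z * g (J z)) \<partial>M) = (\<Sum>k. ennreal (g k) * (\<integral>\<^sup>+z. ennreal (\<sigma> z) * indicator {z. J z = k} z \<partial>M))"
proof -
  have sets[measurable]: "{z. J z = k} \<in> sets M" for k
  proof -
    have "{z \<in> space M. J z = k} \<in> sets M" by measurable
    thus ?thesis using sp by simp
  qed
  have disj: "disjoint_family (\<lambda>k. {z. J z = k})" by (auto simp: disjoint_family_on_def)
  have pt: "ennreal (\<sigma> z * g (J z)) = (\<Sum>k. (ennreal (g k) * ennreal (\<sigma> z)) * indicator {z. J z = k} z)" for z
    by (subst suminf_cmult_indicator[OF disj, of z "J z"]) (auto simp: ennreal_mult s0 g0 mult.commute)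
  have "(\<integral>\<^sup>+z. ennreal (\<sigma> z * g (J z)) \<partial>M) = (\<integral>\<^sup>+z. (\<Sum>k. ennreal (g k) * (ennreal (\<sigma> z) * indicator {z. J z = k} z)) \<partial>M)"
    by (simp add: pt mult.assoc)
  also have "\<dots> = (\<Sum>k. \<integral>\<^sup>+z. ennreal (g k) * (ennreal (\<sigma> z) * indicator {z. J z = k} z) \<partial>M)"
    by (rule nn_integral_suminf) measurable
  also have "\<dots> = (\<Sum>k. ennreal (g k) * (\<integral>\<^sup>+z. ennreal (\<sigma> z) * indicator {z. J z = k} z \<partial>M))"
    by (subst nn_integral_cmult) auto
  finally show ?thesis .
qed

lemma pw:
  fixes w q r b :: real assumes w: "0 < w" and r: "1 < r" "r \<le> q" and b: "0 < b" "b \<le> 1"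
  shows "(w powr (-1/(q-1)) * b) powr q * w \<le> w powr (-1/(q-1)) * b powr r"
proof -
  have q1: "q - 1 \<noteq> 0" using r by simp
  have "(w powr (-1/(q-1)) * b) powr q * w = (w powr (-1/(q-1) * q) * w) * b powr q"
    using w b by (simp add: powr_mult powr_powr)
  also have "w powr (-1/(q-1) * q) * w = w powr (-1/(q-1) * q + 1)"
    using w by (simp only: powr_add powr_one_gt_zero_iff powr_one)
  also have "-1/(q-1) * q + 1 = -1/(q-1)" using q1 by (simp add: field_simps)
  also have "b powr q \<le> b powr r" using b r by (intro powr_mono') auto
  hence "w powr (-1/(q-1)) * b powr q \<le> w powr (-1/(q-1)) * b powr r" by (intro mult_left_mono) auto
  finally show ?thesis .
qed


theorem propositionl1:
  fixes w p :: "complex ^ 'n \<Rightarrow> real" and \<alpha> :: real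
  assumes "0 < \<alpha>"
    and "is_weight w"
    and "is_exponent p"
    and "ess_inf_ball p > 1"
    and "\<forall>f. in_Lvar \<alpha> p w f \<longrightarrow> (\<forall>z\<in>unit_ball. P_plus \<alpha> (\<lambda>\<zeta>. cmod (f \<zeta>)) z < \<infinity>)"
  shows "(AE z in lebesgue. z \<in> unit_ball \<longrightarrow> 0 < w z) \<and>
         in_Lvar \<alpha> (conj_exp p) (\<lambda>_. 1) (\<lambda>z. complex_of_real (w z powr (- 1 / p z)))"
proof
  have wm[measurable]: "w \<in> borel_measurable lebesgue" and w0: "\<forall>z\<in>unit_ball. 0 \<le> w z"
    using assms(2) by (auto simp: is_weight_def)
  have pm[measurable]: "p \<in> borel_measurable lebesgue" using assms(3) by (auto simp: is_exponent_def)
  have hyp: "\<forall>f. in_Lvar \<alpha> p w f \<longrightarrow> (\<forall>z\<in>unit_ball. P_plus \<alpha> (\<lambda>\<zeta>. cmod (f \<zeta>)) z < \<infinity>)"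
    by (rule assms(5))
  show wpos: "AE z in lebesgue. z \<in> unit_ball \<longrightarrow> 0 < w z" by (rule step2[OF wm w0 hyp])
  obtain r where r1: "1 < r" and rp: "AE z in lebesgue. z \<in> unit_ball \<longrightarrow> r \<le> p z"
    using assms(4) unfolding ess_inf_ball_def less_SUP_iff by auto
  define D where "D \<equiv> \<lambda>z::complex^'n. indicator unit_ball z * (1 - (norm z)\<^sup>2) powr (\<alpha> - 1)"
  define M where "M = (mu_alpha \<alpha> :: (complex^'n) measure)"
  have Dm[measurable]: "D \<in> borel_measurable lebesgue" unfolding D_def by (rule D_meas)
  have b3: "\<And>z. 0 \<le> D z" unfolding D_def by (rule D_nonneg)
  have b5: "\<And>z. z \<notin> unit_ball \<Longrightarrow> D z = 0" unfolding D_def by (rule D_out)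
  have Meq: "M = density lebesgue (\<lambda>z. ennreal (D z))" unfolding D_def M_def by (rule M_eq)
  have b7: "\<And>f. f \<in> borel_measurable lebesgue \<Longrightarrow> (\<integral>\<^sup>+z. f z \<partial>M) = (\<integral>\<^sup>+z. ennreal (D z) * f z \<partial>lebesgue)"
    unfolding D_def M_def by (rule M_int)
  have Msp: "space M = UNIV" unfolding M_def by (rule M_space)
  have Mse: "sets M = sets lebesgue" unfolding M_def by (rule M_sets)
  have Bm[measurable]: "(unit_ball :: (complex^'n) set) \<in> sets lebesgue" by (rule B_meas)
  have AEM: "AE z in M. z \<in> unit_ball \<and> 0 < w z \<and> r \<le> p z"
  proof -
    have "AE z in lebesgue. 0 < ennreal (D z) \<longrightarrow> z \<in> unit_ball \<and> 0 < w z \<and> r \<le> p z"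
      using wpos rp by eventually_elim (use b5 in fastforce)
    thus ?thesis unfolding Meq by (subst AE_density) auto
  qed
  define \<sigma> where "\<sigma> z = w z powr (-1 / (p z - 1))" for z
  have \<sigma>m[measurable]: "\<sigma> \<in> borel_measurable lebesgue" unfolding \<sigma>_def[abs_def] by measurable
  have \<sigma>0: "0 \<le> \<sigma> z" for z by (simp add: \<sigma>_def)
  have \<sigma>M: "\<sigma> \<in> borel_measurable M" using \<sigma>m by (simp add: measurable_cong_sets[OF Mse refl])
  have fin: "(\<integral>\<^sup>+z. ennreal (\<sigma> z) \<partial>M) < \<infinity>"
  proof (rule ccontr)
    assume "\<not> ?thesis"
    hence inf: "(\<integral>\<^sup>+z. ennreal (\<sigma> z) \<partial>M) = \<infinity>" by (simp add: not_less top_unique)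
    define J where "J z = nat \<lceil>\<sigma> z * D z\<rceil>" for z
    have Jm: "J \<in> measurable lebesgue (count_space UNIV)"
    proof -
      have g: "(\<lambda>x::real. nat \<lceil>x\<rceil>) \<in> measurable borel (count_space UNIV)" by measurable
      have "(\<lambda>z. \<sigma> z * D z) \<in> borel_measurable lebesgue" by measurable
      from measurable_compose[OF this g] show ?thesis unfolding J_def[abs_def] by simp
    qed
    have JM: "J \<in> measurable M (count_space UNIV)" using Jm by (simp add: measurable_cong_sets[OF Mse refl])
    have Jsets[measurable]: "{z. J z = k} \<in> sets lebesgue" for k
    proof -
      have "{z \<in> space lebesgue. J z = k} \<in> sets lebesgue" using Jm by measurable
      thus ?thesis by simp
    qed
    define mm where "mm k = (\<integral>\<^sup>+z. ennreal (\<sigma> z) * indicator {z. J z = k} z \<partial>M)" for k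
    have mfin: "mm k < \<infinity>" for k
    proof -
      have "mm k = (\<integral>\<^sup>+z. ennreal (D z) * (ennreal (\<sigma> z) * indicator {z. J z = k} z) \<partial>lebesgue)"
        unfolding mm_def by (rule b7) measurable
      also have "\<dots> \<le> (\<integral>\<^sup>+z. ennreal (real k) * indicator (unit_ball :: (complex^'n) set) z \<partial>lebesgue)"
      proof (rule nn_integral_mono)
        fix z
        show "ennreal (D z) * (ennreal (\<sigma> z) * indicator {z. J z = k} z) \<le> ennreal (real k) * indicator unit_ball z"
        proof (cases "z \<in> unit_ball \<and> J z = k")
          case True
          have "\<sigma> z * D z \<le> real (J z)" unfolding J_def by (rule real_nat_ceiling_ge)
          hence "ennreal (D z * \<sigma> z) \<le> ennreal (real k)" using True by (intro ennreal_leI) (simp add: mult.commute)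
          thus ?thesis using True b3[of z] \<sigma>0[of z] by (simp add: ennreal_mult[symmetric])
        next
          case False
          thus ?thesis using b5[of z] by (auto split: split_indicator)
        qed
      qed
      also have "\<dots> = ennreal (real k) * emeasure lebesgue (unit_ball :: (complex^'n) set)" by (simp add: nn_integral_cmult_indicator)
      also have "\<dots> < \<infinity>"
      proof -
        have "emeasure lebesgue (unit_ball :: (complex^'n) set) \<noteq> \<infinity>"
          using fmeasurableD2[OF lmeasurable_ball[of "0::complex^'n" 1]] by (simp add: unit_ball_def)
        thus ?thesis by (simp add: ennreal_mult_less_top less_top)
      qed
      finally show ?thesis .
    qed
    define mr where "mr k = enn2real (mm k)" for k
    have mm_eq: "mm k = ennreal (mr k)" for k using mfin[of k] unfolding mr_def by (simp add: less_top)
    have mr0: "0 \<le> mr k" for k by (simp add: mr_def)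
    have dec: "(\<integral>\<^sup>+z. ennreal (\<sigma> z * g (J z)) \<partial>M) = (\<Sum>k. ennreal (g k * mr k))" if g0: "\<And>k. 0 \<le> g k" for g
    proof -
      have "(\<integral>\<^sup>+z. ennreal (\<sigma> z * g (J z)) \<partial>M) = (\<Sum>k. ennreal (g k) * mm k)"
        unfolding mm_def by (rule decomp[OF Msp \<sigma>M JM \<sigma>0 g0])
      also have "\<dots> = (\<Sum>k. ennreal (g k * mr k))" using g0 mr0 by (simp add: mm_eq ennreal_mult)
      finally show ?thesis .
    qed
    have "(\<Sum>k. ennreal (1 * mr k)) = \<infinity>" using dec[of "\<lambda>_. 1"] inf by simp
    hence nsum: "\<not> summable mr" using ennreal_suminf_neq_top mr0 by auto
    define T where "T k = 1 + (\<Sum>i<k. mr i)" for k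
    define a where "a k = 1 / T (Suc k)" for k
    have ad: "\<not> summable (\<lambda>k. a k * mr k)" and as: "summable (\<lambda>k. a k powr r * mr k)"
      using abel_dini[OF mr0 nsum r1] unfolding a_def T_def by auto
    have T1: "1 \<le> T k" for k unfolding T_def using mr0 by (simp add: sum_nonneg)
    have a0: "0 < a k" and a1: "a k \<le> 1" for k using T1[of "Suc k"] by (auto simp: a_def)
    define f where "f z = complex_of_real (\<sigma> z * a (J z))" for z
    have cf: "cmod (f z) = \<sigma> z * a (J z)" for z
      unfolding f_def norm_of_real by (rule abs_of_nonneg) (simp add: \<sigma>0 less_imp_le[OF a0])
    have fm: "f \<in> borel_measurable lebesgue"
    proof -
      have "(\<lambda>z. a (J z)) \<in> borel_measurable lebesgue"
        using measurable_compose[OF Jm, of a borel] by (simp add: measurable_count_space_eq1)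
      thus ?thesis unfolding f_def[abs_def] by measurable
    qed
    have "(\<integral>\<^sup>+z. ennreal (cmod (f z)) \<partial>M) = \<infinity>"
    proof -
      have "(\<integral>\<^sup>+z. ennreal (cmod (f z)) \<partial>M) = (\<Sum>k. ennreal (a k * mr k))"
        unfolding cf using dec[of a] a0 by (simp add: less_imp_le)
      also have "\<dots> = \<infinity>"
      proof (rule ccontr)
        assume "\<not> ?thesis"
        hence "summable (\<lambda>k. a k * mr k)"
          by (intro summable_suminf_not_top) (auto intro: mult_nonneg_nonneg less_imp_le[OF a0] mr0)
        with ad show False by simp
      qed
      finally show ?thesis .
    qed
    moreover have "in_Lvar \<alpha> p w f"
      unfolding in_Lvar_def
    proof (intro conjI exI[of _ 1])
      show "f \<in> borel_measurable lebesgue" by (rule fm)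
      have "modular \<alpha> p w (\<lambda>z. f z / complex_of_real 1) \<le> (\<integral>\<^sup>+z. ennreal (\<sigma> z * a (J z) powr r) \<partial>M)"
        unfolding modular_def M_def[symmetric]
      proof (rule nn_integral_mono_AE)
        show "AE z in M. ennreal (cmod (f z / complex_of_real 1) powr p z * w z) \<le> ennreal (\<sigma> z * a (J z) powr r)"
          using AEM
        proof eventually_elim
          case (elim z)
          have "cmod (f z / complex_of_real 1) powr p z * w z = (w z powr (-1/(p z - 1)) * a (J z)) powr p z * w z"
            using cf[of z] by (simp add: \<sigma>_def)
          also have "\<dots> \<le> \<sigma> z * a (J z) powr r"
            unfolding \<sigma>_def using elim r1 a0 a1 by (intro pw) auto
          finally show ?case by (rule ennreal_leI)
        qed
      qed
      also have "\<dots> = (\<Sum>k. ennreal (a k powr r * mr k))" using dec[of "\<lambda>k. a k powr r"] by simp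
      also have "\<dots> = ennreal (\<Sum>k. a k powr r * mr k)" using as mr0 by (intro suminf_ennreal2) auto
      also have "\<dots> < \<infinity>" by simp
      finally show "modular \<alpha> p w (\<lambda>z. f z / complex_of_real 1) < \<infinity>" .
    qed simp
    ultimately have inf2: "(\<integral>\<^sup>+z. ennreal (cmod (f z)) \<partial>M) = \<infinity>" and inL: "in_Lvar \<alpha> p w f" by auto
    have z0: "(0::complex^'n) \<in> unit_ball" by (simp add: unit_ball_def)
    have "P_plus \<alpha> (\<lambda>\<zeta>. cmod (f \<zeta>)) 0 < \<infinity>" using hyp inL z0 by blast
    thus False using inf2 P_plus_0[of \<alpha> "\<lambda>\<zeta>. cmod (f \<zeta>)"] by (simp add: M_def)
  qed
  show "in_Lvar \<alpha> (conj_exp p) (\<lambda>_. 1) (\<lambda>z. complex_of_real (w z powr (- 1 / p z)))"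
    unfolding in_Lvar_def
  proof (intro conjI exI[of _ 1])
    show "(\<lambda>z. complex_of_real (w z powr (- 1 / p z))) \<in> borel_measurable lebesgue" by measurable
    have "modular \<alpha> (conj_exp p) (\<lambda>_. 1) (\<lambda>z. complex_of_real (w z powr (- 1 / p z)) / complex_of_real 1)
        = (\<integral>\<^sup>+z. ennreal (\<sigma> z) \<partial>M)"
      unfolding modular_def M_def[symmetric]
    proof (rule nn_integral_cong_AE)
      show "AE z in M. ennreal (cmod (complex_of_real (w z powr (- 1 / p z)) / complex_of_real 1) powr conj_exp p z * 1) = ennreal (\<sigma> z)"
        using AEM
      proof eventually_elim
        case (elim z)
        hence q1: "p z - 1 \<noteq> 0" "p z \<noteq> 0" using r1 by auto
        have "cmod (complex_of_real (w z powr (- 1 / p z)) / complex_of_real 1) = w z powr (- 1 / p z)"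
          by simp
        moreover have "(w z powr (- 1 / p z)) powr conj_exp p z = \<sigma> z"
          unfolding \<sigma>_def conj_exp_def using q1 by (simp add: powr_powr field_simps)
        ultimately show ?case by simp
      qed
    qed
    thus "modular \<alpha> (conj_exp p) (\<lambda>_. 1) (\<lambda>z. complex_of_real (w z powr (- 1 / p z)) / complex_of_real 1) < \<infinity>"
      using fin by simp
  qed simp
qed

end
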